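(* Let $\mathcal O_q$ be the algebra defined in the context, with the degrees and subspaces $\mathcal O_d$ defined there. Then (i) the subspace $\mathcal O_1$ has basis $1,\mathcal W_0,\mathcal W_1$; (ii) for $d\ge2$, $$\mathcal O_d=E_d+\mathcal O_{d-1}+\sum_{k=1}^{d-1}\mathrm{Span}(\mathcal O_k\mathcal O_{d-k}),$$ where $E_d=0$ if $d$ is odd and $E_d=\mathbb F\tilde{\mathcal G}_n$ if $d=2n$ is even.
   Context: All algebras are associative and unital over a field $\mathbb F$; $q\in\mathbb F$ is nonzero and not a root of unity. For elements $X,Y$ of an algebra, $[X,Y]=XY-YX$ and $[X,Y]_q=qXY-q^{-1}YX$. Let $\rho=-(q^2-q^{-2})^2$. The algebra $\mathcal O_q$ is defined by generators (called alternating generators) $\mathcal W_{-k},\mathcal W_{k+1},\mathcal G_{k+1},\tilde{\mathcal G}_{k+1}$ ($k\in\mathbb N$) and the following relations for all $k,\ell\in\mathbb N$: $[\mathcal W_0,\mathcal W_{k+1}]=[\mathcal W_{-k},\mathcal W_1]=(\tilde{\mathcal G}_{k+1}-\mathcal G_{k+1})/(q+q^{-1})$; $[\mathcal W_0,\mathcal G_{k+1}]_q=[\tilde{\mathcal G}_{k+1},\mathcal W_0]_q=\rho\mathcal W_{-k-1}-\rho\mathcal W_{k+1}$; $[\mathcal G_{k+1},\mathcal W_1]_q=[\mathcal W_1,\tilde{\mathcal G}_{k+1}]_q=\rho\mathcal W_{k+2}-\rho\mathcal W_{-k}$; $[\mathcal W_{-k},\mathcal W_{-\ell}]=0$, $[\mathcal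 W_{k+1},\mathcal W_{\ell+1}]=0$; $[\mathcal W_{-k},\mathcal W_{\ell+1}]+[\mathcal W_{k+1},\mathcal W_{-\ell}]=0$; $[\mathcal W_{-k},\mathcal G_{\ell+1}]+[\mathcal G_{k+1},\mathcal W_{-\ell}]=0$; $[\mathcal W_{-k},\tilde{\mathcal G}_{\ell+1}]+[\tilde{\mathcal G}_{k+1},\mathcal W_{-\ell}]=0$; $[\mathcal W_{k+1},\mathcal G_{\ell+1}]+[\mathcal G_{k+1},\mathcal W_{\ell+1}]=0$; $[\mathcal W_{k+1},\tilde{\mathcal G}_{\ell+1}]+[\tilde{\mathcal G}_{k+1},\mathcal W_{\ell+1}]=0$; $[\mathcal G_{k+1},\mathcal G_{\ell+1}]=0$, $[\tilde{\mathcal G}_{k+1},\tilde{\mathcal G}_{\ell+1}]=0$; $[\tilde{\mathcal G}_{k+1},\mathcal G_{\ell+1}]+[\mathcal G_{k+1},\tilde{\mathcal G}_{\ell+1}]=0$. Assign degrees: $\deg\mathcal G_{k+1}=\deg\tilde{\mathcal G}_{k+1}=2k+2$ and $\deg\mathcal W_{-k}=\deg\mathcal W_{k+1}=2k+1$ for $k\in\mathbb N$. For $d\in\mathbb N$, $\mathcal O_d$ is the subspace of $\mathcal O_q$ spanned by all products $a_1a_2\cdots a_n$ ($n\in\mathbb N$, the empty product being $1$) of alternating generators with $\sum_{i=1}^n\deg(a_i)\le d$. *)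

theory Defs
  imports Main
begin

text \<open>Alternating generators of O_q:
  Wm k = W_{-k}, Wp k = W_{k+1}, G k = G_{k+1}, Gt k = tilde G_{k+1}  (k :: nat).\<close>
datatype gen = Wm nat | Wp nat | G nat | Gt nat

fun gdeg :: "gen \<Rightarrow> nat" where
  "gdeg (Wm k) = 2 * k + 1"
| "gdeg (Wp k) = 2 * k + 1"
| "gdeg (G k) = 2 * k + 2"
| "gdeg (Gt k) = 2 * k + 2"

definition word_deg :: "gen list \<Rightarrow> nat" where
  "word_deg w = sum_list (map gdeg w)"

text \<open>Free associative unital algebra F<gen>: elements are (finitely supported)
  functions from words to the field; multiplication is concatenation convolution.\<close>
type_synonym 'k fa = "gen list \<Rightarrow> 'k"

definition wd :: "gen list \<Rightarrow> 'k::field fa" where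
  "wd w = (\<lambda>u. if u = w then 1 else 0)"

definition fa_zero :: "'k::field fa" where "fa_zero = (\<lambda>_. 0)"
definition fa_one :: "'k::field fa" where "fa_one = wd []"
definition fa_add :: "'k::field fa \<Rightarrow> 'k fa \<Rightarrow> 'k fa" where
  "fa_add f g = (\<lambda>w. f w + g w)"
definition fa_sub :: "'k::field fa \<Rightarrow> 'k fa \<Rightarrow> 'k fa" where
  "fa_sub f g = (\<lambda>w. f w - g w)"
definition fa_scale :: "'k::field \<Rightarrow> 'k fa \<Rightarrow> 'k fa" where
  "fa_scale c f = (\<lambda>w. c * f w)"
definition fa_mul :: "'k::field fa \<Rightarrow> 'k fa \<Rightarrow> 'k fa" where
  "fa_mul f g = (\<lambda>w. \<Sum>i\<le>length w. f (take i w) * g (drop i w))"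

definition gel :: "gen \<Rightarrow> 'k::field fa" where
  "gel x = wd [x]"

definition wprod :: "gen list \<Rightarrow> 'k::field fa" where
  "wprod w = foldr (\<lambda>x acc. fa_mul (gel x) acc) w fa_one"

inductive_set fspan :: "'k::field fa set \<Rightarrow> 'k fa set" for S where
  zero: "fa_zero \<in> fspan S"
| step: "x \<in> S \<Longrightarrow> y \<in> fspan S \<Longrightarrow> fa_add (fa_scale c x) y \<in> fspan S"

definition comm :: "'k::field fa \<Rightarrow> 'k fa \<Rightarrow> 'k fa" where
  "comm X Y = fa_sub (fa_mul X Y) (fa_mul Y X)"

definition qcomm :: "'k::field \<Rightarrow> 'k fa \<Rightarrow> 'k fa \<Rightarrow> 'k fa" where
  "qcomm q X Y = fa_sub (fa_scale q (fa_mul X Y)) (fa_scale (inverse q) (fa_mul Y X))"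

definition rho :: "'k::field \<Rightarrow> 'k" where
  "rho q = - ((q\<^sup>2 - inverse (q\<^sup>2))\<^sup>2)"

definition rels :: "'k::field \<Rightarrow> 'k fa set" where
  "rels q = (\<Union>k. \<Union>l.
    { fa_sub (comm (gel (Wm 0)) (gel (Wp k)))
             (fa_scale (inverse (q + inverse q)) (fa_sub (gel (Gt k)) (gel (G k)))),
      fa_sub (comm (gel (Wm k)) (gel (Wp 0)))
             (fa_scale (inverse (q + inverse q)) (fa_sub (gel (Gt k)) (gel (G k)))),
      fa_sub (qcomm q (gel (Wm 0)) (gel (G k)))
             (fa_sub (fa_scale (rho q) (gel (Wm (Suc k)))) (fa_scale (rho q) (gel (Wp k)))),
      fa_sub (qcomm q (gel (Gt k)) (gel (Wm 0)))
             (fa_sub (fa_scale (rho q) (gel (Wm (Suc k)))) (fa_scale (rho q) (gel (Wp k)))),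
      fa_sub (qcomm q (gel (G k)) (gel (Wp 0)))
             (fa_sub (fa_scale (rho q) (gel (Wp (Suc k)))) (fa_scale (rho q) (gel (Wm k)))),
      fa_sub (qcomm q (gel (Wp 0)) (gel (Gt k)))
             (fa_sub (fa_scale (rho q) (gel (Wp (Suc k)))) (fa_scale (rho q) (gel (Wm k)))),
      comm (gel (Wm k)) (gel (Wm l)),
      comm (gel (Wp k)) (gel (Wp l)),
      fa_add (comm (gel (Wm k)) (gel (Wp l))) (comm (gel (Wp k)) (gel (Wm l))),
      fa_add (comm (gel (Wm k)) (gel (G l))) (comm (gel (G k)) (gel (Wm l))),
      fa_add (comm (gel (Wm k)) (gel (Gt l))) (comm (gel (Gt k)) (gel (Wm l))),
      fa_add (comm (gel (Wp k)) (gel (G l))) (comm (gel (G k)) (gel (Wp l))),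
      fa_add (comm (gel (Wp k)) (gel (Gt l))) (comm (gel (Gt k)) (gel (Wp l))),
      comm (gel (G k)) (gel (G l)),
      comm (gel (Gt k)) (gel (Gt l)),
      fa_add (comm (gel (Gt k)) (gel (G l))) (comm (gel (G k)) (gel (Gt l))) })"

text \<open>Two-sided ideal of F<gen> generated by the relations; O_q = F<gen> / I.\<close>
definition Oideal :: "'k::field \<Rightarrow> 'k fa set" where
  "Oideal q = fspan {fa_mul (fa_mul (wprod u) r) (wprod v) | u r v. r \<in> rels q}"

text \<open>Preimage in F<gen> of the image of a set S under the quotient map
  F<gen> \<rightarrow> O_q. Subspaces of O_q correspond to these; two subsets of F<gen>
  have equal images in O_q iff their modI sets are equal.\<close>
definition modI :: "'k::field \<Rightarrow> 'k fa set \<Rightarrow> 'k fa set" where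
  "modI q S = {x. \<exists>s\<in>S. fa_sub x s \<in> Oideal q}"

text \<open>Lift of O_d: span of products of alternating generators of total degree \<le> d.\<close>
definition Od :: "nat \<Rightarrow> 'k::field fa set" where
  "Od d = fspan {wprod w | w. word_deg w \<le> d}"

definition Ed_gens :: "nat \<Rightarrow> 'k::field fa set" where
  "Ed_gens d = (if even d then {gel (Gt (d div 2 - 1))} else {})"

text \<open>Lift of Span(O_k O_{d-k}) for 1 \<le> k \<le> d-1, summed over k.\<close>
definition prod_gens :: "nat \<Rightarrow> 'k::field fa set" where
  "prod_gens d = {fa_mul a b | k a b. 1 \<le> k \<and> k \<le> d - 1 \<and> a \<in> Od k \<and> b \<in> Od (d - k)}"

end

theory Submission
  imports Defs
begin

lemma mul_wd_left: "fa_mul (wd u) f w = (if take (length u) w = u then f (drop (length u) w) else (0::'k::field))"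
proof -
  have "fa_mul (wd u) f w = (\<Sum>i\<le>length w. if i = length u then (if take (length u) w = u then f (drop (length u) w) else 0) else 0)"
    unfolding fa_mul_def wd_def
  proof (rule sum.cong)
    fix i assume "i \<in> {..length w}"
    then have "i \<le> length w" by simp
    then show "(if take i w = u then 1 else 0) * f (drop i w) = (if i = length u then (if take (length u) w = u then f (drop (length u) w) else 0) else (0::'k))"
      by auto
  qed (rule refl)
  also have "\<dots> = (if take (length u) w = u then f (drop (length u) w) else 0)"
    by (auto simp: sum.delta)
  finally show ?thesis .
qed

lemma mul_wd_right: "fa_mul f (wd v) w = (if drop (length w - length v) w = v then f (take (length w - length v) w) else (0::'k::field))"
proof -
  have "fa_mul f (wd v) w = (\<Sum>i\<le>length w. if i = length w - length v then (if drop (length w - length v) w = v then f (take (length w - length v) w) else 0) else 0)"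
    unfolding fa_mul_def wd_def
  proof (rule sum.cong)
    fix i assume "i \<in> {..length w}"
    then have "i \<le> length w" by simp
    then show "f (take i w) * (if drop i w = v then 1 else 0) = (if i = length w - length v then (if drop (length w - length v) w = v then f (take (length w - length v) w) else 0) else (0::'k))"
      by auto
  qed (rule refl)
  also have "\<dots> = (if drop (length w - length v) w = v then f (take (length w - length v) w) else 0)"
    by (auto simp: sum.delta)
  finally show ?thesis .
qed

lemma mul_one_right[simp]: "fa_mul f fa_one = (f :: 'k::field fa)"
  by (rule ext) (simp add: fa_one_def mul_wd_right)

lemma mul_one_left[simp]: "fa_mul fa_one f = (f :: 'k::field fa)"
  by (rule ext) (simp add: fa_one_def mul_wd_left)

lemma wd_mul: "fa_mul (wd u) (wd v) = (wd (u @ v) :: 'k::field fa)"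
  apply (rule ext)
  apply (simp add: mul_wd_left)
  apply (simp add: wd_def)
  by (metis append_eq_conv_conj)

lemma wprod_wd: "wprod w = (wd w :: 'k::field fa)"
  by (induction w) (simp_all add: wprod_def fa_one_def gel_def wd_mul)

lemma gel_mul: "fa_mul (gel x) (gel y) = (wd [x,y] :: 'k::field fa)"
  by (simp add: gel_def wd_mul)

lemma mul_add_left: "fa_mul (fa_add (fa_scale c x) y) b = fa_add (fa_scale c (fa_mul x b)) (fa_mul y (b::'k::field fa))"
  by (rule ext) (simp add: fa_mul_def fa_add_def fa_scale_def sum.distrib sum_distrib_left algebra_simps)

lemma mul_add_right: "fa_mul b (fa_add (fa_scale c x) y) = fa_add (fa_scale c (fa_mul b x)) (fa_mul b (y::'k::field fa))"
  by (rule ext) (simp add: fa_mul_def fa_add_def fa_scale_def sum.distrib sum_distrib_left algebra_simps)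

lemma mul_zero_left[simp]: "fa_mul fa_zero b = (fa_zero::'k::field fa)"
  by (rule ext) (simp add: fa_mul_def fa_zero_def)
lemma mul_zero_right[simp]: "fa_mul b fa_zero = (fa_zero::'k::field fa)"
  by (rule ext) (simp add: fa_mul_def fa_zero_def)

lemma fspan_base: "x \<in> S \<Longrightarrow> x \<in> fspan S"
proof -
  assume "x \<in> S"
  then have "fa_add (fa_scale 1 x) fa_zero \<in> fspan S" by (rule fspan.step) (rule fspan.zero)
  moreover have "fa_add (fa_scale 1 x) fa_zero = x" by (rule ext) (simp add: fa_add_def fa_scale_def fa_zero_def)
  ultimately show ?thesis by simp
qed

lemma fspan_add: "x \<in> fspan S \<Longrightarrow> y \<in> fspan S \<Longrightarrow> fa_add x y \<in> fspan S"
proof (induction x rule: fspan.induct)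
  case zero
  have "fa_add fa_zero y = y" by (rule ext) (simp add: fa_add_def fa_zero_def)
  then show ?case using zero by simp
next
  case (step x z c)
  have "fa_add (fa_add (fa_scale c x) z) y = fa_add (fa_scale c x) (fa_add z y)"
    by (rule ext) (simp add: fa_add_def add.assoc)
  then show ?case using step by (simp add: fspan.step)
qed

lemma fspan_scale: "x \<in> fspan S \<Longrightarrow> fa_scale c x \<in> fspan S"
proof (induction x rule: fspan.induct)
  case zero
  have "fa_scale c fa_zero = fa_zero" by (rule ext) (simp add: fa_scale_def fa_zero_def)
  then show ?case by (simp add: fspan.zero)
next
  case (step x z d)
  have "fa_scale c (fa_add (fa_scale d x) z) = fa_add (fa_scale (c*d) x) (fa_scale c z)"
    by (rule ext) (simp add: fa_add_def fa_scale_def algebra_simps)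
  then show ?case using step by (simp add: fspan.step)
qed

lemma fspan_sub: "x \<in> fspan S \<Longrightarrow> y \<in> fspan S \<Longrightarrow> fa_sub x y \<in> fspan S"
proof -
  assume a: "x \<in> fspan S" "y \<in> fspan S"
  have "fa_sub x y = fa_add x (fa_scale (-1) y)" by (rule ext) (simp add: fa_add_def fa_sub_def fa_scale_def)
  then show ?thesis using a by (simp add: fspan_add fspan_scale)
qed

lemma fspan_mono: "(\<And>x. x \<in> S \<Longrightarrow> x \<in> fspan T) \<Longrightarrow> y \<in> fspan S \<Longrightarrow> y \<in> fspan T"
proof -
  assume h: "\<And>x. x \<in> S \<Longrightarrow> x \<in> fspan T"
  show "y \<in> fspan S \<Longrightarrow> y \<in> fspan T"
    by (induction y rule: fspan.induct) (auto intro: fspan.zero fspan_add fspan_scale h)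
qed


fun chi :: "'k::field \<Rightarrow> 'k \<Rightarrow> gen \<Rightarrow> 'k" where
  "chi a b (Wm k) = (if even k then a else b)"
| "chi a b (Wp k) = (if even k then b else a)"
| "chi a b (G k) = 0"
| "chi a b (Gt k) = 0"

definition chiw :: "'k::field \<Rightarrow> 'k \<Rightarrow> gen list \<Rightarrow> 'k" where
  "chiw a b w = prod_list (map (chi a b) w)"

definition fin :: "'k::field fa \<Rightarrow> bool" where
  "fin f = finite {w. f w \<noteq> 0}"

definition ev :: "'k::field \<Rightarrow> 'k \<Rightarrow> 'k fa \<Rightarrow> 'k" where
  "ev a b f = (\<Sum>w\<in>{w. f w \<noteq> 0}. f w * chiw a b w)"

lemma ev_sup: "finite S \<Longrightarrow> {w. f w \<noteq> 0} \<subseteq> S \<Longrightarrow> ev a b f = (\<Sum>w\<in>S. f w * chiw a b w)"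
  unfolding ev_def by (rule sum.mono_neutral_left) auto

lemma fin_add[simp]: "fin f \<Longrightarrow> fin g \<Longrightarrow> fin (fa_add f g)"
  unfolding fin_def fa_add_def by (rule finite_subset[of _ "{w. f w \<noteq> 0} \<union> {w. g w \<noteq> 0}"]) auto
lemma fin_sub[simp]: "fin f \<Longrightarrow> fin g \<Longrightarrow> fin (fa_sub f g)"
  unfolding fin_def fa_sub_def by (rule finite_subset[of _ "{w. f w \<noteq> 0} \<union> {w. g w \<noteq> 0}"]) auto
lemma fin_scale[simp]: "fin f \<Longrightarrow> fin (fa_scale c f)"
  unfolding fin_def fa_scale_def by (rule finite_subset[of _ "{w. f w \<noteq> 0}"]) auto
lemma fin_wd[simp]: "fin (wd u)"
  unfolding fin_def wd_def by (rule finite_subset[of _ "{u}"]) auto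
lemma fin_zero[simp]: "fin fa_zero"
  unfolding fin_def fa_zero_def by simp

lemma ev_add[simp]: "fin f \<Longrightarrow> fin g \<Longrightarrow> ev a b (fa_add f g) = ev a b f + ev a b g"
proof -
  assume h: "fin f" "fin g"
  let ?S = "{w. f w \<noteq> 0} \<union> {w. g w \<noteq> 0}"
  have fS: "finite ?S" using h by (simp add: fin_def)
  have "ev a b (fa_add f g) = (\<Sum>w\<in>?S. fa_add f g w * chiw a b w)"
    by (rule ev_sup[OF fS]) (auto simp: fa_add_def)
  also have "\<dots> = (\<Sum>w\<in>?S. f w * chiw a b w) + (\<Sum>w\<in>?S. g w * chiw a b w)"
    by (simp add: fa_add_def sum.distrib algebra_simps)
  also have "\<dots> = ev a b f + ev a b g"
    by (simp add: ev_sup[OF fS])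
  finally show ?thesis .
qed

lemma ev_sub[simp]: "fin f \<Longrightarrow> fin g \<Longrightarrow> ev a b (fa_sub f g) = ev a b f - ev a b g"
proof -
  assume h: "fin f" "fin g"
  let ?S = "{w. f w \<noteq> 0} \<union> {w. g w \<noteq> 0}"
  have fS: "finite ?S" using h by (simp add: fin_def)
  have "ev a b (fa_sub f g) = (\<Sum>w\<in>?S. fa_sub f g w * chiw a b w)"
    by (rule ev_sup[OF fS]) (auto simp: fa_sub_def)
  also have "\<dots> = (\<Sum>w\<in>?S. f w * chiw a b w) - (\<Sum>w\<in>?S. g w * chiw a b w)"
    by (simp add: fa_sub_def sum_subtractf algebra_simps)
  also have "\<dots> = ev a b f - ev a b g"
    by (simp add: ev_sup[OF fS])
  finally show ?thesis .
qed

lemma ev_scale[simp]: "fin f \<Longrightarrow> ev a b (fa_scale c f) = c * ev a b f"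
proof -
  assume h: "fin f"
  let ?S = "{w. f w \<noteq> 0}"
  have fS: "finite ?S" using h by (simp add: fin_def)
  have "ev a b (fa_scale c f) = (\<Sum>w\<in>?S. fa_scale c f w * chiw a b w)"
    by (rule ev_sup[OF fS]) (auto simp: fa_scale_def)
  also have "\<dots> = c * (\<Sum>w\<in>?S. f w * chiw a b w)"
    by (simp add: fa_scale_def sum_distrib_left algebra_simps)
  also have "\<dots> = c * ev a b f"
    by (simp add: ev_sup[OF fS])
  finally show ?thesis .
qed

lemma ev_wd[simp]: "ev a b (wd u) = chiw a b u"
  by (subst ev_sup[of "{u}"]) (auto simp: wd_def)

lemma ev_zero[simp]: "ev a b fa_zero = 0"
  by (simp add: ev_def fa_zero_def)

lemma shift_val: "fa_mul (fa_mul (wd u) r) (wd v) (u @ x @ v) = (r x :: 'k::field)"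
  by (simp add: mul_wd_left mul_wd_right)

lemma shift_supp: "fa_mul (fa_mul (wd u) r) (wd v) w \<noteq> (0 :: 'k::field) \<Longrightarrow> \<exists>x. w = u @ x @ v \<and> r x \<noteq> 0"
proof -
  assume h: "fa_mul (fa_mul (wd u) r) (wd v) w \<noteq> (0 :: 'k::field)"
  let ?t = "take (length w - length v) w"
  have d: "drop (length w - length v) w = v" and h2: "fa_mul (wd u) r ?t \<noteq> 0"
    using h by (auto simp: mul_wd_right split: if_splits)
  have t: "take (length u) ?t = u" and h3: "r (drop (length u) ?t) \<noteq> 0"
    using h2 by (auto simp: mul_wd_left split: if_splits)
  have "w = ?t @ v" using d by (metis append_take_drop_id)
  also have "?t = u @ drop (length u) ?t" using t by (metis append_take_drop_id)
  finally show ?thesis using h3 by auto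
qed

lemma shift_ev: "fin r \<Longrightarrow> fin (fa_mul (fa_mul (wd u) r) (wd v)) \<and>
   ev a b (fa_mul (fa_mul (wd u) r) (wd v)) = chiw a b u * ev a b r * chiw a b (v :: gen list)"
proof -
  assume fr: "fin r"
  let ?h = "fa_mul (fa_mul (wd u) r) (wd v)"
  let ?R = "{x. r x \<noteq> 0}"
  let ?S = "(\<lambda>x. u @ x @ v) ` ?R"
  have fR: "finite ?R" using fr by (simp add: fin_def)
  have sub: "{w. ?h w \<noteq> 0} \<subseteq> ?S" using shift_supp by blast
  have fS: "finite ?S" using fR by simp
  have "fin ?h" unfolding fin_def using finite_subset[OF sub fS] .
  have inj: "inj_on (\<lambda>x. u @ x @ v) ?R" by (auto simp: inj_on_def)
  have "ev a b ?h = (\<Sum>w\<in>?S. ?h w * chiw a b w)" by (rule ev_sup[OF fS sub])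
  also have "\<dots> = (\<Sum>x\<in>?R. ?h (u @ x @ v) * chiw a b (u @ x @ v))"
    by (simp add: sum.reindex[OF inj])
  also have "\<dots> = (\<Sum>x\<in>?R. chiw a b u * (r x * chiw a b x) * chiw a b v)"
    by (rule sum.cong) (simp_all add: shift_val chiw_def algebra_simps)
  also have "\<dots> = chiw a b u * ev a b r * chiw a b v"
    by (simp add: ev_def sum_distrib_left sum_distrib_right)
  finally show ?thesis using \<open>fin ?h\<close> by simp
qed

lemma rels_ev: "r \<in> rels q \<Longrightarrow> fin r \<and> ev a b r = 0"
  unfolding rels_def
  by (auto simp: comm_def qcomm_def wd_mul gel_def chiw_def)

lemma ideal_ev: "x \<in> Oideal q \<Longrightarrow> fin x \<and> ev a b x = 0"
  unfolding Oideal_def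
proof (induction x rule: fspan.induct)
  case zero then show ?case by simp
next
  case (step x y c)
  then obtain u r v where x: "x = fa_mul (fa_mul (wprod u) r) (wprod v)" and r: "r \<in> rels q" by blast
  have "fin x \<and> ev a b x = 0" using shift_ev[of r u v a b] rels_ev[OF r] unfolding x wprod_wd by simp
  then show ?case using step by simp
qed

lemma part2: "fa_add (fa_scale a fa_one)
                     (fa_add (fa_scale b (gel (Wm 0))) (fa_scale c (gel (Wp 0)))) \<in> Oideal q
              \<Longrightarrow> a = 0 \<and> b = 0 \<and> (c::'k::field) = 0"
proof -
  assume h: "fa_add (fa_scale a fa_one)
                     (fa_add (fa_scale b (gel (Wm 0))) (fa_scale c (gel (Wp 0)))) \<in> Oideal q"
  have e: "\<And>\<alpha> \<beta>. a + b * \<alpha> + c * \<beta> = 0"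
  proof -
    fix \<alpha> \<beta> :: 'k
    show "a + b * \<alpha> + c * \<beta> = 0"
      using ideal_ev[OF h, of \<alpha> \<beta>] by (simp add: fa_one_def gel_def chiw_def add.assoc)
  qed
  have "a = 0" using e[of 0 0] by simp
  moreover have "b = 0" using e[of 1 0] \<open>a = 0\<close> by simp
  moreover have "c = 0" using e[of 0 1] \<open>a = 0\<close> by simp
  ultimately show ?thesis by simp
qed


lemma word_deg_append: "word_deg (u @ v) = word_deg u + word_deg v"
  by (simp add: word_deg_def)

lemma Od_mul: "a \<in> Od k \<Longrightarrow> b \<in> Od m \<Longrightarrow> fa_mul a b \<in> (Od (k + m) :: 'k::field fa set)"
proof -
  assume a: "a \<in> Od k" and b: "b \<in> Od m"
  have base: "fa_mul (wprod u) (wprod v) \<in> (Od (k + m) :: 'k fa set)" if "word_deg u \<le> k" "word_deg v \<le> m" for u v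
  proof -
    have "fa_mul (wprod u) (wprod v) = (wprod (u @ v) :: 'k fa)" by (simp add: wprod_wd wd_mul)
    moreover have "word_deg (u @ v) \<le> k + m" using that by (simp add: word_deg_append)
    ultimately show ?thesis unfolding Od_def by (auto intro: fspan_base)
  qed
  have right: "fa_mul (wprod u) y \<in> (Od (k + m) :: 'k fa set)" if "word_deg u \<le> k" "y \<in> Od m" for u y
    using that(2) unfolding Od_def[of m]
  proof (induction y rule: fspan.induct)
    case zero then show ?case by (simp add: Od_def fspan.zero)
  next
    case (step x y c)
    then show ?case using base[OF that(1)] by (auto simp: mul_add_right intro!: fspan_add fspan_scale simp: Od_def)
  qed
  show ?thesis using a unfolding Od_def[of k]
  proof (induction a rule: fspan.induct)
    case zero then show ?case by (simp add: Od_def fspan.zero)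
  next
    case (step x y c)
    then show ?case using right b by (auto simp: mul_add_left intro!: fspan_add fspan_scale simp: Od_def)
  qed
qed

lemma gel_Od: "gdeg x \<le> k \<Longrightarrow> gel x \<in> (Od k :: 'k::field fa set)"
proof -
  assume "gdeg x \<le> k"
  then have "word_deg [x] \<le> k" by (simp add: word_deg_def)
  moreover have "wprod [x] = (gel x :: 'k fa)" by (simp add: wprod_def)
  ultimately show ?thesis unfolding Od_def by (metis (mono_tags, lifting) fspan_base mem_Collect_eq)
qed

lemma Od_mono: "k \<le> m \<Longrightarrow> x \<in> Od k \<Longrightarrow> x \<in> (Od m :: 'k::field fa set)"
  unfolding Od_def by (erule fspan_mono[rotated]) (auto intro!: fspan_base)

lemma rel_in_ideal: "r \<in> rels q \<Longrightarrow> r \<in> Oideal q"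
proof -
  assume "r \<in> rels q"
  moreover have "r = fa_mul (fa_mul (wprod []) r) (wprod [])" by (simp add: wprod_def)
  ultimately show ?thesis unfolding Oideal_def by (blast intro: fspan_base)
qed

lemma modI_mono: "A \<subseteq> B \<Longrightarrow> modI q A \<subseteq> modI q B"
  unfolding modI_def by blast

lemma modI_red: "(\<And>x. x \<in> A \<Longrightarrow> \<exists>s\<in>B. fa_sub x s \<in> Oideal q) \<Longrightarrow> modI q A \<subseteq> modI q B"
proof
  fix y assume h: "\<And>x. x \<in> A \<Longrightarrow> \<exists>s\<in>B. fa_sub x s \<in> Oideal q" and y: "y \<in> modI q A"
  then obtain x where x: "x \<in> A" "fa_sub y x \<in> Oideal q" unfolding modI_def by blast
  then obtain s where s: "s \<in> B" "fa_sub x s \<in> Oideal q" using h by blast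
  have "fa_sub y s = fa_add (fa_sub y x) (fa_sub x s)" by (rule ext) (simp add: fa_sub_def fa_add_def)
  then have "fa_sub y s \<in> Oideal q" using x s unfolding Oideal_def by (simp add: fspan_add)
  then show "y \<in> modI q B" using s unfolding modI_def by blast
qed


lemma gdeg_pos: "gdeg x \<ge> 1"
  by (cases x) auto

lemma word_deg_pos: "w \<noteq> [] \<Longrightarrow> word_deg w \<ge> 1"
  proof (cases w)
  case (Cons a l) then show ?thesis using gdeg_pos[of a] by (simp add: word_deg_def)
qed simp

lemma word_deg_cons: "word_deg (a # w) = gdeg a + word_deg w"
  by (simp add: word_deg_def)

lemma wprod_single[simp]: "wprod [x] = (gel x :: 'k::field fa)"
  by (simp add: wprod_def)

lemma q_facts:
  fixes q :: "'k::field"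
  assumes "q \<noteq> 0" and "\<forall>n>0. q ^ n \<noteq> 1"
  shows "q + inverse q \<noteq> 0" "rho q \<noteq> 0"
proof -
  have q4: "q ^ 4 \<noteq> 1" using assms(2) by simp
  show "q + inverse q \<noteq> 0"
  proof
    assume "q + inverse q = 0"
    then have "q * (q + inverse q) = 0" by simp
    then have "q * q + 1 = 0" using assms(1) by (simp add: distrib_left)
    then have "q * q = -1" by (simp add: eq_neg_iff_add_eq_0)
    moreover have "q^4 = (q*q)*(q*q)" by (simp add: eval_nat_numeral)
    ultimately have "q^4 = 1" by simp
    then show False using q4 by simp
  qed
  show "rho q \<noteq> 0"
  proof
    assume "rho q = 0"
    then have "q\<^sup>2 - inverse (q\<^sup>2) = 0" by (simp add: rho_def)
    then have "q\<^sup>2 * q\<^sup>2 = 1" using assms(1) by (simp add: field_simps)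
    then have "q^4 = 1" by (simp add: power_add[symmetric])
    then show False using q4 by simp
  qed
qed


lemma part3_sub:
  fixes q :: "'k::field" and d :: nat
  assumes t0: "q + inverse q \<noteq> 0" and r0: "rho q \<noteq> 0" and d2: "d \<ge> 2"
  defines "T \<equiv> fspan (Ed_gens d \<union> Od (d - 1) \<union> prod_gens d) :: 'k fa set"
  shows "x \<in> Od d \<Longrightarrow> \<exists>s\<in>T. fa_sub x s \<in> Oideal q"
proof -
  have T_base: "y \<in> T" if "y \<in> Ed_gens d \<union> Od (d - 1) \<union> prod_gens d" for y
    unfolding T_def using that by (rule fspan_base)
  have pg: "fa_mul a b \<in> T" if "1 \<le> k" "k \<le> d - 1" "a \<in> Od k" "b \<in> Od (d - k)" for a b k
    using that by (intro T_base) (auto simp: prod_gens_def)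
  have od1: "y \<in> T" if "y \<in> Od (d - 1)" for y using that by (intro T_base) auto
  have I_scale: "fa_scale c r \<in> Oideal q" if "r \<in> Oideal q" for c r
    using that unfolding Oideal_def by (rule fspan_scale)
  have T_sub: "fa_sub a b \<in> T" if "a \<in> T" "b \<in> T" for a b using that unfolding T_def by (rule fspan_sub)
  have T_add: "fa_add a b \<in> T" if "a \<in> T" "b \<in> T" for a b using that unfolding T_def by (rule fspan_add)
  have T_scale: "fa_scale c a \<in> T" if "a \<in> T" for a c using that unfolding T_def by (rule fspan_scale)
  have zero_I: "fa_zero \<in> Oideal q" unfolding Oideal_def by (rule fspan.zero)
  have self: "fa_sub y y = fa_zero" for y :: "'k fa" by (rule ext) (simp add: fa_sub_def fa_zero_def)
  have gen: "\<exists>s\<in>T. fa_sub (wprod w) s \<in> Oideal q" if wd: "word_deg w \<le> d" for w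
  proof (cases "word_deg w \<le> d - 1")
    case True
    then have "wprod w \<in> T" by (intro od1) (auto simp: Od_def intro: fspan_base)
    then show ?thesis using zero_I self by metis
  next
    case False
    then have wd': "word_deg w = d" using wd by simp
    show ?thesis
    proof (cases w)
      case Nil then show ?thesis using wd' d2 by (simp add: word_deg_def)
    next
      case (Cons a w')
      show ?thesis
      proof (cases "w' = []")
        case False
        have p: "word_deg w' \<ge> 1" using word_deg_pos[OF False] .
        have eq: "wprod w = fa_mul (gel a) (wprod w')" using Cons by (simp add: wprod_def)
        have "wprod w \<in> T" unfolding eq
        proof (rule pg[of "gdeg a"])
          show "1 \<le> gdeg a" by (rule gdeg_pos)
          show "gdeg a \<le> d - 1" using wd' p Cons by (simp add: word_deg_cons)
          show "gel a \<in> Od (gdeg a)" by (rule gel_Od) simp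
          show "wprod w' \<in> Od (d - gdeg a)" using wd' Cons
            by (auto simp: word_deg_cons Od_def intro!: fspan_base)
        qed
        then show ?thesis using zero_I self by metis
      next
        case True
        then have w: "w = [a]" using Cons by simp
        have ga: "gdeg a = d" using wd' w by (simp add: word_deg_def)
        have W0: "gel (Wm 0) \<in> (Od 1 :: 'k fa set)" by (rule gel_Od) simp
        have W1: "gel (Wp 0) \<in> (Od 1 :: 'k fa set)" by (rule gel_Od) simp
        have dd: "d - (d - 1) = 1" using d2 by simp
        show ?thesis
        proof (cases a)
          case (Gt k)
          have "gel (Gt k) \<in> T" using ga Gt by (intro T_base) (auto simp: Ed_gens_def)
          then have "wprod w \<in> T" using w Gt by simp
          then show ?thesis using zero_I self by metis
        next
          case (G k)
          let ?t = "q + inverse q"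
          let ?r = "fa_sub (comm (gel (Wm 0)) (gel (Wp k)))
             (fa_scale (inverse ?t) (fa_sub (gel (Gt k)) (gel (G k)))) :: 'k fa"
          let ?s = "fa_sub (gel (Gt k)) (fa_scale ?t (fa_sub (fa_mul (gel (Wm 0)) (gel (Wp k))) (fa_mul (gel (Wp k)) (gel (Wm 0)))))"
          have rI: "?r \<in> Oideal q" by (rule rel_in_ideal) (unfold rels_def, blast)
          have "fa_sub (gel (G k)) ?s = fa_scale ?t ?r"
            using t0 by (intro ext) (simp add: fa_sub_def fa_scale_def comm_def field_simps)
          then have "fa_sub (wprod w) ?s \<in> Oideal q" using I_scale[OF rI] w G by simp
          moreover have "?s \<in> T"
          proof (intro T_sub T_scale)
            show "gel (Gt k) \<in> T" using ga G by (intro T_base) (auto simp: Ed_gens_def)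
            show "fa_mul (gel (Wm 0)) (gel (Wp k)) \<in> T"
              using ga G d2 W0 by (intro pg[of 1]) (auto intro: gel_Od)
            show "fa_mul (gel (Wp k)) (gel (Wm 0)) \<in> T"
              using ga G d2 W0 dd by (intro pg[of "d - 1"]) (auto intro: gel_Od)
          qed
          ultimately show ?thesis by blast
        next
          case (Wm k)
          then obtain j where j: "k = Suc j" using ga d2 by (cases k) auto
          let ?r = "fa_sub (qcomm q (gel (Wm 0)) (gel (G j)))
             (fa_sub (fa_scale (rho q) (gel (Wm (Suc j)))) (fa_scale (rho q) (gel (Wp j)))) :: 'k fa"
          let ?s = "fa_add (gel (Wp j)) (fa_scale (inverse (rho q)) (qcomm q (gel (Wm 0)) (gel (G j))))"
          have rI: "?r \<in> Oideal q" by (rule rel_in_ideal) (unfold rels_def, blast)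
          have "fa_sub (gel (Wm (Suc j))) ?s = fa_scale (- inverse (rho q)) ?r"
            using r0 by (intro ext) (simp add: fa_sub_def fa_add_def fa_scale_def field_simps)
          then have "fa_sub (wprod w) ?s \<in> Oideal q" using I_scale[OF rI] w Wm j by simp
          moreover have "?s \<in> T"
          proof (intro T_add T_scale)
            show "gel (Wp j) \<in> T" using ga Wm j by (intro od1 gel_Od) auto
            show "qcomm q (gel (Wm 0)) (gel (G j)) \<in> T"
              unfolding qcomm_def
            proof (intro T_sub T_scale)
              show "fa_mul (gel (Wm 0)) (gel (G j)) \<in> T"
                using ga Wm j d2 W0 by (intro pg[of 1]) (auto intro: gel_Od)
              show "fa_mul (gel (G j)) (gel (Wm 0)) \<in> T"
                using ga Wm j d2 W0 dd by (intro pg[of "d - 1"]) (auto intro: gel_Od)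
            qed
          qed
          ultimately show ?thesis by blast
        next
          case (Wp k)
          then obtain j where j: "k = Suc j" using ga d2 by (cases k) auto
          let ?r = "fa_sub (qcomm q (gel (G j)) (gel (Wp 0)))
             (fa_sub (fa_scale (rho q) (gel (Wp (Suc j)))) (fa_scale (rho q) (gel (Wm j)))) :: 'k fa"
          let ?s = "fa_add (gel (Wm j)) (fa_scale (inverse (rho q)) (qcomm q (gel (G j)) (gel (Wp 0))))"
          have rI: "?r \<in> Oideal q" by (rule rel_in_ideal) (unfold rels_def, blast)
          have "fa_sub (gel (Wp (Suc j))) ?s = fa_scale (- inverse (rho q)) ?r"
            using r0 by (intro ext) (simp add: fa_sub_def fa_add_def fa_scale_def field_simps)
          then have "fa_sub (wprod w) ?s \<in> Oideal q" using I_scale[OF rI] w Wp j by simp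
          moreover have "?s \<in> T"
          proof (intro T_add T_scale)
            show "gel (Wm j) \<in> T" using ga Wp j by (intro od1 gel_Od) auto
            show "qcomm q (gel (G j)) (gel (Wp 0)) \<in> T"
              unfolding qcomm_def
            proof (intro T_sub T_scale)
              show "fa_mul (gel (G j)) (gel (Wp 0)) \<in> T"
                using ga Wp j d2 W1 dd by (intro pg[of "d - 1"]) (auto intro: gel_Od)
              show "fa_mul (gel (Wp 0)) (gel (G j)) \<in> T"
                using ga Wp j d2 W1 by (intro pg[of 1]) (auto intro: gel_Od)
            qed
          qed
          ultimately show ?thesis by blast
        qed
      qed
    qed
  qed
  show "x \<in> Od d \<Longrightarrow> \<exists>s\<in>T. fa_sub x s \<in> Oideal q"
    unfolding Od_def[of d]
  proof (induction x rule: fspan.induct)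
    case zero
    have "fa_zero \<in> T" unfolding T_def by (rule fspan.zero)
    then show ?case using zero_I self by metis
  next
    case (step x y c)
    obtain w where x: "x = wprod w" "word_deg w \<le> d" using step(1) by blast
    obtain sx where sx: "sx \<in> T" "fa_sub x sx \<in> Oideal q" using gen[OF x(2)] x(1) by blast
    obtain sy where sy: "sy \<in> T" "fa_sub y sy \<in> Oideal q" using step(3) by blast
    have "fa_sub (fa_add (fa_scale c x) y) (fa_add (fa_scale c sx) sy)
        = fa_add (fa_scale c (fa_sub x sx)) (fa_sub y sy)"
      by (rule ext) (simp add: fa_sub_def fa_add_def fa_scale_def algebra_simps)
    moreover have "fa_add (fa_scale c (fa_sub x sx)) (fa_sub y sy) \<in> Oideal q"
      using sx sy unfolding Oideal_def by (intro fspan_add fspan_scale)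
    moreover have "fa_add (fa_scale c sx) sy \<in> T" using sx sy by (intro T_add T_scale)
    ultimately show ?case by metis
  qed
qed


lemma part1: "Od 1 = (fspan {fa_one, gel (Wm 0), gel (Wp 0)} :: 'k::field fa set)"
proof -
  have "{wprod w | w. word_deg w \<le> 1} = ({fa_one, gel (Wm 0), gel (Wp 0)} :: 'k fa set)"
  proof (intro equalityI subsetI)
    fix y :: "'k fa" assume "y \<in> {wprod w | w. word_deg w \<le> 1}"
    then obtain w where y: "y = wprod w" and w: "word_deg w \<le> 1" by blast
    show "y \<in> {fa_one, gel (Wm 0), gel (Wp 0)}"
    proof (cases w)
      case Nil then show ?thesis using y by (simp add: wprod_def)
    next
      case (Cons a l)
      have "l = []"
      proof (rule ccontr)
        assume "l \<noteq> []"
        then have "word_deg l \<ge> 1" by (rule word_deg_pos)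
        then show False using w Cons gdeg_pos[of a] by (simp add: word_deg_cons)
      qed
      moreover have "gdeg a \<le> 1" using w Cons by (simp add: word_deg_cons)
      then have "a = Wm 0 \<or> a = Wp 0" by (cases a) auto
      ultimately show ?thesis using y Cons by auto
    qed
  next
    fix y :: "'k fa" assume y: "y \<in> {fa_one, gel (Wm 0), gel (Wp 0)}"
    have m1: "fa_one \<in> {wprod w | w. word_deg w \<le> 1}" by (intro CollectI exI[of _ "[]"]) (simp add: word_deg_def wprod_def)
    have m2: "wprod [Wm 0] \<in> {wprod w | w. word_deg w \<le> 1}" by (intro CollectI exI[of _ "[Wm 0]"]) (simp add: word_deg_def)
    have m3: "wprod [Wp 0] \<in> {wprod w | w. word_deg w \<le> 1}" by (intro CollectI exI[of _ "[Wp 0]"]) (simp add: word_deg_def)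
    have e1: "wprod [] = (fa_one :: 'k fa)" by (simp add: wprod_def)
    show "y \<in> {wprod w | w. word_deg w \<le> 1}"
      using y m1 m2 m3 by auto
  qed
  then show ?thesis unfolding Od_def by simp
qed

theorem lemma7p4:
  fixes q :: "'k::field"
  assumes "q \<noteq> 0" and "\<forall>n>0. q ^ n \<noteq> 1"
  shows "modI q (Od 1) = modI q (fspan {fa_one, gel (Wm 0), gel (Wp 0)})
       \<and> (\<forall>a b c. fa_add (fa_scale a fa_one)
                     (fa_add (fa_scale b (gel (Wm 0))) (fa_scale c (gel (Wp 0)))) \<in> Oideal q
              \<longrightarrow> a = 0 \<and> b = 0 \<and> c = 0)
       \<and> (\<forall>d\<ge>2. modI q (Od d) =
                 modI q (fspan (Ed_gens d \<union> Od (d - 1) \<union> prod_gens d)))"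
proof (intro conjI allI impI)
  show "modI q (Od 1) = modI q (fspan {fa_one, gel (Wm 0), gel (Wp 0)})" unfolding part1 by (rule refl)
next
  fix a b c :: 'k
  assume "fa_add (fa_scale a fa_one)
                     (fa_add (fa_scale b (gel (Wm 0))) (fa_scale c (gel (Wp 0)))) \<in> Oideal q"
  then have "a = 0 \<and> b = 0 \<and> c = 0" by (rule part2)
  then show "a = 0" "b = 0" "c = 0" by auto
next
  fix d :: nat assume d2: "d \<ge> 2"
  note qf = q_facts[OF assms]
  show "modI q (Od d) = modI q (fspan (Ed_gens d \<union> Od (d - 1) \<union> prod_gens d))"
  proof
    show "modI q (Od d) \<subseteq> modI q (fspan (Ed_gens d \<union> Od (d - 1) \<union> prod_gens d))"
      by (rule modI_red) (rule part3_sub[OF qf d2])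
  next
    have "y \<in> Od d" if "y \<in> fspan (Ed_gens d \<union> Od (d - 1) \<union> prod_gens d)" for y :: "'k fa"
    proof -
      have "x \<in> Od d" if x: "x \<in> Ed_gens d \<union> Od (d - 1) \<union> prod_gens d" for x :: "'k fa"
      proof -
        { assume "x \<in> Ed_gens d"
          then have "x = gel (Gt (d div 2 - 1))" "even d" by (auto simp: Ed_gens_def split: if_splits)
          moreover obtain m where m: "d = 2 * m" using \<open>even d\<close> by blast
          moreover have "gdeg (Gt (d div 2 - 1)) = d" using m d2 by simp
          ultimately have ?thesis by (simp add: gel_Od) }
        moreover
        { assume "x \<in> Od (d - 1)" then have ?thesis by (rule Od_mono[rotated]) simp }
        moreover
        { assume "x \<in> prod_gens d"
          then obtain k a b where "x = fa_mul a b" "1 \<le> k" "k \<le> d - 1" "a \<in> Od k" "b \<in> Od (d - k)"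
            by (auto simp: prod_gens_def)
          then have ?thesis using Od_mul[of a k b "d - k"] by simp }
        ultimately show ?thesis using x by blast
      qed
      then show ?thesis using that unfolding Od_def[of d] by (rule fspan_mono)
    qed
    then show "modI q (fspan (Ed_gens d \<union> Od (d - 1) \<union> prod_gens d)) \<subseteq> modI q (Od d)"
      by (intro modI_mono) blast
  qed
qed

end
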